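(* Let $\kappa$ be a regular cardinal and $G$ a graph. If there exists a cardinal $\lambda<\kappa$ such that $G$ is $(\kappa,\lambda)$-connected, then $K_\kappa$ is a minor of $G$.
   Context: A graph is a pair $(V,E)$ with $E\subseteq[V]^2$. For infinite cardinals $\kappa,\lambda$, a graph is $(\kappa,\lambda)$-connected if after the removal of any set of fewer than $\kappa$ vertices, the number of connected components of the remaining graph is non-zero and less than $\lambda$. $K_\kappa$ is the complete graph on $\kappa$ vertices. A graph $H$ is a minor of $G$ if there are pairwise disjoint non-empty vertex sets $(X_u)_{u\in V_H}$ of $G$, each inducing a connected subgraph, such that for each edge $\{u,v\}$ of $H$ some vertex of $X_u$ is adjacent in $G$ to some vertex of $X_v$. *)

theory Defs
  imports Main
begin

definition graph :: "'v set \<Rightarrow> 'v set set \<Rightarrow> bool" where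
  "graph V E \<longleftrightarrow> E \<subseteq> {{x, y} | x y. x \<noteq> y \<and> x \<in> V \<and> y \<in> V}"

definition adj_in :: "'v set set \<Rightarrow> 'v set \<Rightarrow> 'v \<Rightarrow> 'v \<Rightarrow> bool" where
  "adj_in E X x y \<longleftrightarrow> x \<in> X \<and> y \<in> X \<and> {x, y} \<in> E"

definition connected_in :: "'v set set \<Rightarrow> 'v set \<Rightarrow> bool" where
  "connected_in E X \<longleftrightarrow> X \<noteq> {} \<and> (\<forall>x\<in>X. \<forall>y\<in>X. (adj_in E X)\<^sup>*\<^sup>* x y)"

definition components :: "'v set \<Rightarrow> 'v set set \<Rightarrow> 'v set \<Rightarrow> 'v set set" where
  "components V E S = (V - S) // {(x, y). x \<in> V - S \<and> y \<in> V - S \<and> (adj_in E (V - S))\<^sup>*\<^sup>* x y}"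

text \<open>(kappa,lambda)-connectedness; cardinals are represented by cardinal orders.\<close>
definition kl_connected :: "'v set \<Rightarrow> 'v set set \<Rightarrow> 'k rel \<Rightarrow> 'l rel \<Rightarrow> bool" where
  "kl_connected V E kap lam \<longleftrightarrow>
     (\<forall>S. S \<subseteq> V \<and> (card_of S, kap) \<in> ordLess \<longrightarrow>
        components V E S \<noteq> {} \<and> (card_of (components V E S), lam) \<in> ordLess)"

definition complete_minor :: "'v set \<Rightarrow> 'v set set \<Rightarrow> 'k set \<Rightarrow> bool" where
  "complete_minor V E K \<longleftrightarrow> (\<exists>X :: 'k \<Rightarrow> 'v set.
     (\<forall>u\<in>K. X u \<noteq> {} \<and> X u \<subseteq> V \<and> connected_in E (X u)) \<and>
     (\<forall>u\<in>K. \<forall>v\<in>K. u \<noteq> v \<longrightarrow> X u \<inter> X v = {} \<and> (\<exists>x\<in>X u. \<exists>y\<in>X v. {x, y} \<in> E)))"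

end

theory Submission
  imports Defs
begin
unbundle cardinal_syntax

locale kl_setting =
  fixes V :: "'v set" and E :: "'v set set" and kap :: "'k rel" and lam :: "'k rel"
  assumes gr: "graph V E"
    and ck: "Card_order kap" and ik: "BNF_Cardinal_Arithmetic.cinfinite kap" and rk: "regularCard kap"
    and cl: "Card_order lam" and il: "BNF_Cardinal_Arithmetic.cinfinite lam" and lk: "(lam, kap) \<in> ordLess"
    and klc: "kl_connected V E kap lam"
begin

abbreviation small :: "'a set \<Rightarrow> bool" where "small A \<equiv> ( |A| <o kap)"

lemma small_subset: "small B \<Longrightarrow> A \<subseteq> B \<Longrightarrow> small A"
  using card_of_mono1 ordLeq_ordLess_trans by blast

lemma small_Un: "small A \<Longrightarrow> small B \<Longrightarrow> small (A \<union> B)"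
  using card_of_Un_ordLess_infinite_Field ck ik unfolding cinfinite_def by blast

lemma small_UN: "small I \<Longrightarrow> (\<And>i. i \<in> I \<Longrightarrow> small (A i)) \<Longrightarrow> small (\<Union>i\<in>I. A i)"
  using card_of_UNION_ordLess_infinite_Field_regularCard rk ck ik by blast

lemma small_Union: "small I \<Longrightarrow> (\<And>X. X \<in> I \<Longrightarrow> small X) \<Longrightarrow> small (\<Union>I)"
  using small_UN[of I "\<lambda>x. x"] by simp

lemma lam_small: "|I| <o lam \<Longrightarrow> small I"
  using lk ordLess_transitive by blast

lemma finite_small: "finite A \<Longrightarrow> small A"
  using finite_ordLess_infinite[of "|A|" kap] ck ik unfolding cinfinite_def
  by (simp add: card_of_well_order_on card_order_on_well_order_on Field_card_of)

lemma nat_small: "small (UNIV :: nat set)"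
proof -
  have "natLeq \<le>o lam" using natLeq_ordLeq_cinfinite cl il by blast
  hence "natLeq <o kap" using lk ordLeq_ordLess_trans by blast
  thus ?thesis using card_of_nat ordIso_ordLess_trans by blast
qed

lemma big_diff: "\<not> small A \<Longrightarrow> small B \<Longrightarrow> \<not> small (A - B)"
  using small_Un[of "A - B" B] small_subset[of "A - B \<union> B" A] by auto

lemma small_insert: "small A \<Longrightarrow> small (insert a A)"
  using small_Un[of "{a}" A] finite_small[of "{a}"] by simp

lemma big_nonempty: "\<not> small A \<Longrightarrow> A \<noteq> {}"
  using finite_small by auto


abbreviation comps where "comps S \<equiv> components V E S"
definition crel :: "'v set \<Rightarrow> ('v \<times> 'v) set" where
  "crel S = {(x, y). x \<in> V - S \<and> y \<in> V - S \<and> (adj_in E (V - S))\<^sup>*\<^sup>* x y}"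

lemma comps_def': "comps S = (V - S) // crel S"
  unfolding components_def crel_def by simp

lemma adj_sym: "adj_in E A x y = adj_in E A y x"
  unfolding adj_in_def by (auto simp: insert_commute)

lemma rtc_sym: "(adj_in E A)\<^sup>*\<^sup>* x y \<Longrightarrow> (adj_in E A)\<^sup>*\<^sup>* y x"
proof (induction rule: rtranclp_induct)
  case base then show ?case by simp
next
  case (step y z)
  then show ?case using adj_sym by (metis converse_rtranclp_into_rtranclp)
qed

lemma adj_mono: "A \<subseteq> B \<Longrightarrow> (adj_in E A)\<^sup>*\<^sup>* x y \<Longrightarrow> (adj_in E B)\<^sup>*\<^sup>* x y"
  by (erule rtranclp_mono[THEN predicate2D, rotated]) (auto simp: adj_in_def)

lemma equiv_crel: "equiv (V - S) (crel S)"
proof (rule equivI)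
  show "refl_on (V - S) (crel S)" unfolding refl_on_def crel_def by auto
  show "sym (crel S)" unfolding sym_def crel_def using rtc_sym by blast
  show "trans (crel S)" unfolding trans_def crel_def
    by (auto intro: rtranclp_trans[of "adj_in E (V - S)"])
  show "crel S \<subseteq> (V - S) \<times> (V - S)" unfolding crel_def by auto
qed

lemma comp_sub: "C \<in> comps S \<Longrightarrow> C \<subseteq> V - S"
  using in_quotient_imp_subset[OF equiv_crel] comps_def' by blast

lemma comp_ne: "C \<in> comps S \<Longrightarrow> C \<noteq> {}"
  using in_quotient_imp_non_empty[OF equiv_crel] comps_def' by blast

lemma comp_disj: "C1 \<in> comps S \<Longrightarrow> C2 \<in> comps S \<Longrightarrow> x \<in> C1 \<Longrightarrow> x \<in> C2 \<Longrightarrow> C1 = C2"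
  using quotient_disj[OF equiv_crel] comps_def' by blast

lemma comp_ex: "x \<in> V - S \<Longrightarrow> \<exists>C\<in>comps S. x \<in> C"
proof -
  assume x: "x \<in> V - S"
  have "crel S `` {x} \<in> comps S" using x comps_def' by (simp add: quotientI)
  moreover have "x \<in> crel S `` {x}" using x unfolding crel_def by simp
  ultimately show ?thesis by blast
qed

lemma comp_iff: "C \<in> comps S \<Longrightarrow> x \<in> C \<Longrightarrow> (y \<in> C \<longleftrightarrow> y \<in> V - S \<and> (adj_in E (V - S))\<^sup>*\<^sup>* x y)"
proof -
  assume C: "C \<in> comps S" and x: "x \<in> C"
  then obtain z where z: "z \<in> V - S" "C = crel S `` {z}" using comps_def' quotientE by metis
  have "(z, x) \<in> crel S" using z x by simp
  hence "C = crel S `` {x}" using z(2) equiv_class_eq[OF equiv_crel] by metis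
  thus ?thesis using x unfolding crel_def by auto
qed

lemma comp_L2: "S \<subseteq> T \<Longrightarrow> C \<in> comps S \<Longrightarrow> C' \<in> comps T \<Longrightarrow> x \<in> C \<Longrightarrow> x \<in> C' \<Longrightarrow> C' \<subseteq> C"
proof
  fix y assume st: "S \<subseteq> T" and C: "C \<in> comps S" and C': "C' \<in> comps T" and x: "x \<in> C" "x \<in> C'" and y: "y \<in> C'"
  have "y \<in> V - T \<and> (adj_in E (V - T))\<^sup>*\<^sup>* x y" using comp_iff[OF C' x(2)] y by blast
  hence "y \<in> V - S \<and> (adj_in E (V - S))\<^sup>*\<^sup>* x y" using adj_mono[of "V - T" "V - S"] st by blast
  thus "y \<in> C" using comp_iff[OF C x(1)] by blast
qed

lemma comp_adj: "C \<in> comps S \<Longrightarrow> x \<in> C \<Longrightarrow> y \<in> V - S \<Longrightarrow> {x, y} \<in> E \<Longrightarrow> y \<in> C"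
proof -
  assume C: "C \<in> comps S" and x: "x \<in> C" and y: "y \<in> V - S" and e: "{x, y} \<in> E"
  have "x \<in> V - S" using comp_sub C x by blast
  hence "adj_in E (V - S) x y" using y e unfolding adj_in_def by simp
  moreover have "(adj_in E (V - S))\<^sup>*\<^sup>* x x" by simp
  ultimately show ?thesis using comp_iff[OF C x] y by (meson rtranclp.rtrancl_into_rtrancl)
qed

lemma comp_path: "C \<in> comps S \<Longrightarrow> x \<in> C \<Longrightarrow> y \<in> C \<Longrightarrow> (adj_in E C)\<^sup>*\<^sup>* x y"
proof -
  assume C: "C \<in> comps S" and x: "x \<in> C" and y: "y \<in> C"
  have "(adj_in E (V - S))\<^sup>*\<^sup>* x y" using comp_iff[OF C x] y by blast
  thus ?thesis using y
  proof (induction rule: rtranclp_induct)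
    case base then show ?case by simp
  next
    case (step y z)
    have "y \<in> C" using comp_adj[OF C step.prems, of y] step.hyps(2) unfolding adj_in_def
      by (auto simp: insert_commute)
    hence "(adj_in E C)\<^sup>*\<^sup>* x y" using step.IH by blast
    moreover have "adj_in E C y z" using step.hyps(2) \<open>y \<in> C\<close> step.prems unfolding adj_in_def by simp
    ultimately show ?case by (meson rtranclp.rtrancl_into_rtrancl)
  qed
qed

lemma comps_bounds: "S \<subseteq> V \<Longrightarrow> small S \<Longrightarrow> comps S \<noteq> {} \<and> |comps S| <o lam"
  using klc unfolding kl_connected_def by blast

lemma comps_small: "S \<subseteq> V \<Longrightarrow> small S \<Longrightarrow> small (comps S)"
  using comps_bounds lam_small by blast

lemma V_big: "S \<subseteq> V \<Longrightarrow> small S \<Longrightarrow> \<not> small (V - S)"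
proof
  assume S: "S \<subseteq> V" "small S" "small (V - S)"
  hence "small V" using small_Un[of S "V - S"] by (simp add: Un_absorb1)
  hence "comps V \<noteq> {}" using comps_bounds[of V] by blast
  moreover have "comps V = {}" unfolding comps_def' by simp
  ultimately show False by blast
qed

lemma L1:
  assumes T: "T \<subseteq> V" "small T" and Y: "Y \<subseteq> V - T" "\<not> small Y"
    and cl: "\<And>C. C \<in> comps T \<Longrightarrow> C \<inter> Y \<noteq> {} \<Longrightarrow> C \<subseteq> Y"
  shows "\<exists>C\<in>comps T. C \<subseteq> Y \<and> \<not> small C"
proof (rule ccontr)
  assume "\<not> ?thesis"
  hence sm: "\<And>C. C \<in> {C\<in>comps T. C \<subseteq> Y} \<Longrightarrow> small C" by blast
  have "small {C\<in>comps T. C \<subseteq> Y}" using comps_small[OF T] by (rule small_subset) blast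
  hence "small (\<Union>{C\<in>comps T. C \<subseteq> Y})" using sm by (rule small_Union)
  moreover have "Y \<subseteq> \<Union>{C\<in>comps T. C \<subseteq> Y}"
  proof
    fix y assume y: "y \<in> Y"
    then obtain C where "C \<in> comps T" "y \<in> C" using comp_ex Y(1) by blast
    thus "y \<in> \<Union>{C\<in>comps T. C \<subseteq> Y}" using cl y by blast
  qed
  ultimately show False using Y(2) small_subset by metis
qed


definition splits :: "'v set \<Rightarrow> 'v set \<Rightarrow> bool" where
  "splits S S' \<longleftrightarrow> (\<forall>C\<in>comps S. \<not> small C \<longrightarrow>
     (\<exists>C1\<in>comps S'. \<exists>C2\<in>comps S'. \<not> small C1 \<and> \<not> small C2 \<and> C1 \<subseteq> C \<and> C2 \<subseteq> C \<and> C1 \<noteq> C2))"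

lemma refine:
  assumes "S \<subseteq> T" "T \<subseteq> V" "small T" "C1 \<in> comps S" "\<not> small C1"
  shows "\<exists>C'\<in>comps T. C' \<subseteq> C1 \<and> \<not> small C'"
proof -
  have Y: "C1 - T \<subseteq> V - T" using comp_sub[OF assms(4)] by blast
  have Yb: "\<not> small (C1 - T)" using big_diff assms by blast
  have cl: "C' \<subseteq> C1 - T" if H: "C' \<in> comps T" "C' \<inter> (C1 - T) \<noteq> {}" for C'
  proof -
    obtain x where "x \<in> C'" "x \<in> C1" using H by blast
    hence "C' \<subseteq> C1" using comp_L2[OF assms(1) assms(4) H(1)] by blast
    thus ?thesis using comp_sub[OF H(1)] by blast
  qed
  show ?thesis using L1[OF assms(2,3) Y Yb cl] by blast
qed

lemma big_comp_ex:
  assumes "U \<subseteq> V" "small U"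
  shows "\<exists>C\<in>comps U. \<not> small C"
  using L1[OF assms, of "V - U"] V_big[OF assms] comp_sub by blast

lemma step1:
  assumes NS: "\<And>U C. U \<subseteq> V \<Longrightarrow> small U \<Longrightarrow> C \<in> comps U \<Longrightarrow> \<not> small C \<Longrightarrow>
      \<exists>T. U \<subseteq> T \<and> T \<subseteq> V \<and> small T \<and>
        (\<exists>C1\<in>comps T. \<exists>C2\<in>comps T. \<not> small C1 \<and> \<not> small C2 \<and> C1 \<subseteq> C \<and> C2 \<subseteq> C \<and> C1 \<noteq> C2)"
    and U: "U \<subseteq> V" "small U"
  shows "\<exists>T. U \<subseteq> T \<and> T \<subseteq> V \<and> small T \<and> T \<noteq> U \<and> splits U T"
proof -
  define B where "B = {C\<in>comps U. \<not> small C}"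
  have "\<forall>C\<in>B. \<exists>T. U \<subseteq> T \<and> T \<subseteq> V \<and> small T \<and>
        (\<exists>C1\<in>comps T. \<exists>C2\<in>comps T. \<not> small C1 \<and> \<not> small C2 \<and> C1 \<subseteq> C \<and> C2 \<subseteq> C \<and> C1 \<noteq> C2)"
    using NS[OF U] unfolding B_def by simp
  from bchoice[OF this] obtain f where f: "\<forall>C\<in>B. U \<subseteq> f C \<and> f C \<subseteq> V \<and> small (f C) \<and>
        (\<exists>C1\<in>comps (f C). \<exists>C2\<in>comps (f C). \<not> small C1 \<and> \<not> small C2 \<and> C1 \<subseteq> C \<and> C2 \<subseteq> C \<and> C1 \<noteq> C2)"
    by blast
  define T where "T = U \<union> (\<Union>C\<in>B. f C)"
  have sB: "small B" using comps_small[OF U] unfolding B_def by (rule small_subset) blast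
  have sT: "small T" unfolding T_def using small_Un[OF U(2) small_UN[OF sB]] f by blast
  have TV: "T \<subseteq> V" unfolding T_def using U f by blast
  have UT: "U \<subseteq> T" unfolding T_def by blast
  have sp: "splits U T" unfolding splits_def
  proof (intro ballI impI)
    fix C assume C: "C \<in> comps U" "\<not> small C"
    hence CB: "C \<in> B" unfolding B_def by blast
    then obtain C1 C2 where c: "C1 \<in> comps (f C)" "C2 \<in> comps (f C)" "\<not> small C1" "\<not> small C2"
      "C1 \<subseteq> C" "C2 \<subseteq> C" "C1 \<noteq> C2" using bspec[OF f CB] by (elim conjE bexE) blast
    have fT: "f C \<subseteq> T" unfolding T_def using CB by blast
    obtain D1 where d1: "D1 \<in> comps T" "D1 \<subseteq> C1" "\<not> small D1" using refine[OF fT TV sT c(1) c(3)] by blast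
    obtain D2 where d2: "D2 \<in> comps T" "D2 \<subseteq> C2" "\<not> small D2" using refine[OF fT TV sT c(2) c(4)] by blast
    have "D1 \<noteq> D2"
    proof
      assume "D1 = D2"
      moreover obtain x where "x \<in> D1" using big_nonempty[OF d1(3)] by blast
      ultimately have "x \<in> C1" "x \<in> C2" using d1(2) d2(2) by auto
      thus False using comp_disj[OF c(1) c(2)] c(7) by blast
    qed
    thus "\<exists>C1\<in>comps T. \<exists>C2\<in>comps T. \<not> small C1 \<and> \<not> small C2 \<and> C1 \<subseteq> C \<and> C2 \<subseteq> C \<and> C1 \<noteq> C2"
      using d1 d2 c by (intro bexI[where x=D1] bexI[where x=D2] conjI) auto
  qed
  have "T \<noteq> U"
  proof
    assume TU: "T = U"
    obtain C0 where C0: "C0 \<in> comps U" "\<not> small C0" using big_comp_ex[OF U] by blast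
    then obtain C1 C2 where c: "C1 \<in> comps U" "C2 \<in> comps U" "\<not> small C1" "\<not> small C2"
      "C1 \<subseteq> C0" "C2 \<subseteq> C0" "C1 \<noteq> C2" using sp TU unfolding splits_def by blast
    obtain x where x: "x \<in> C1" using big_nonempty[OF c(3)] by blast
    obtain y where y: "y \<in> C2" using big_nonempty[OF c(4)] by blast
    have "C1 = C0" using comp_disj[OF c(1) C0(1) x] x c(5) by blast
    moreover have "C2 = C0" using comp_disj[OF c(2) C0(1) y] y c(6) by blast
    ultimately show False using c(7) by blast
  qed
  thus ?thesis using UT TV sT sp by blast
qed


definition stab :: "'v set \<Rightarrow> 'v set \<Rightarrow> bool" where
  "stab S0 D \<longleftrightarrow> (\<forall>T. S0 \<subseteq> T \<longrightarrow> T \<subseteq> V \<longrightarrow> small T \<longrightarrow>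
     (\<forall>C1\<in>comps T. \<forall>C2\<in>comps T. \<not> small C1 \<longrightarrow> \<not> small C2 \<longrightarrow> C1 \<subseteq> D \<longrightarrow> C2 \<subseteq> D \<longrightarrow> C1 = C2))"

lemma stable: "\<exists>S0 D. S0 \<subseteq> V \<and> small S0 \<and> D \<in> comps S0 \<and> \<not> small D \<and> stab S0 D"
proof (rule ccontr)
  assume nst: "\<not> ?thesis"
  have NS: "\<exists>T. U \<subseteq> T \<and> T \<subseteq> V \<and> small T \<and>
        (\<exists>C1\<in>comps T. \<exists>C2\<in>comps T. \<not> small C1 \<and> \<not> small C2 \<and> C1 \<subseteq> C \<and> C2 \<subseteq> C \<and> C1 \<noteq> C2)"
    if H: "U \<subseteq> V" "small U" "C \<in> comps U" "\<not> small C" for U C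
  proof -
    have "\<not> stab U C" using nst H by auto
    thus ?thesis unfolding stab_def by auto
  qed
  define A where "A = {M :: ('v set \<times> 'v set) set.
     (\<forall>p\<in>M. fst p \<subseteq> snd p \<and> snd p \<subseteq> V \<and> small (snd p) \<and> fst p \<noteq> snd p \<and> splits (fst p) (snd p)) \<and>
     (\<forall>p\<in>M. \<forall>q\<in>M. p \<noteq> q \<longrightarrow> snd p \<subseteq> fst q \<or> snd q \<subseteq> fst p)}"
  have "\<forall>C\<in>chains A. \<Union>C \<in> A"
  proof
    fix C assume C: "C \<in> chains A"
    have 1: "\<forall>p\<in>\<Union>C. fst p \<subseteq> snd p \<and> snd p \<subseteq> V \<and> small (snd p) \<and> fst p \<noteq> snd p \<and> splits (fst p) (snd p)"
    proof
      fix p assume "p \<in> \<Union>C"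
      then obtain M where "M \<in> C" "p \<in> M" by blast
      moreover have "M \<in> A" using C \<open>M \<in> C\<close> unfolding chains_def by blast
      ultimately show "fst p \<subseteq> snd p \<and> snd p \<subseteq> V \<and> small (snd p) \<and> fst p \<noteq> snd p \<and> splits (fst p) (snd p)"
        unfolding A_def by simp
    qed
    have 2: "\<forall>p\<in>\<Union>C. \<forall>q\<in>\<Union>C. p \<noteq> q \<longrightarrow> snd p \<subseteq> fst q \<or> snd q \<subseteq> fst p"
    proof (intro ballI impI)
      fix p q assume "p \<in> \<Union>C" "q \<in> \<Union>C" "p \<noteq> q"
      then obtain M1 M2 where m: "M1 \<in> C" "p \<in> M1" "M2 \<in> C" "q \<in> M2" by blast
      have "M1 \<subseteq> M2 \<or> M2 \<subseteq> M1" using C m unfolding chains_def chain_subset_def by blast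
      then obtain M where "M \<in> C" "p \<in> M" "q \<in> M" using m by blast
      moreover have "M \<in> A" using C \<open>M \<in> C\<close> unfolding chains_def by blast
      ultimately show "snd p \<subseteq> fst q \<or> snd q \<subseteq> fst p" using \<open>p \<noteq> q\<close> unfolding A_def by simp
    qed
    show "\<Union>C \<in> A" using 1 2 unfolding A_def by simp
  qed
  then obtain M where MA: "M \<in> A" and Mmax: "\<forall>X\<in>A. M \<subseteq> X \<longrightarrow> X = M" using Zorn_Lemma by blast
  have Mp: "\<And>p. p \<in> M \<Longrightarrow> fst p \<subseteq> snd p \<and> snd p \<subseteq> V \<and> small (snd p) \<and> fst p \<noteq> snd p \<and> splits (fst p) (snd p)"
    using MA unfolding A_def by simp
  have Mpq: "\<And>p q. p \<in> M \<Longrightarrow> q \<in> M \<Longrightarrow> p \<noteq> q \<Longrightarrow> snd p \<subseteq> fst q \<or> snd q \<subseteq> fst p"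
    using MA unfolding A_def by simp
  have notsmall: "\<not> |M| <o lam"
  proof
    assume Ml: "|M| <o lam"
    define U where "U = (\<Union>p\<in>M. snd p)"
    have sU: "small U" unfolding U_def using small_UN[OF lam_small[OF Ml]] Mp by blast
    have UV: "U \<subseteq> V" unfolding U_def using Mp by blast
    obtain T where T: "U \<subseteq> T" "T \<subseteq> V" "small T" "T \<noteq> U" "splits U T"
      using step1[OF NS UV sU] by blast
    define M' where "M' = insert (U, T) M"
    have "M' \<in> A" unfolding A_def M'_def
    proof (intro CollectI conjI ballI impI)
      fix p assume pi: "p \<in> insert (U, T) M"
      have "fst p \<subseteq> snd p \<and> snd p \<subseteq> V \<and> small (snd p) \<and> fst p \<noteq> snd p \<and> splits (fst p) (snd p)"
      proof (cases "p \<in> M")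
        case True then show ?thesis using Mp by blast
      next
        case False then have "p = (U, T)" using pi by blast
        then show ?thesis using T by simp
      qed
      thus "fst p \<subseteq> snd p" "snd p \<subseteq> V" "small (snd p)" "fst p \<noteq> snd p" "splits (fst p) (snd p)"
        by auto
    next
      fix p q assume pq: "p \<in> insert (U, T) M" "q \<in> insert (U, T) M" "p \<noteq> q"
      show "snd p \<subseteq> fst q \<or> snd q \<subseteq> fst p"
      proof (cases "p \<in> M \<and> q \<in> M")
        case True then show ?thesis using Mpq pq(3) by blast
      next
        case False
        show ?thesis
        proof (cases "p = (U, T)")
          case True
          hence "q \<in> M" using pq by auto
          hence "snd q \<subseteq> U" unfolding U_def by blast
          thus ?thesis using True by simp
        next
          case F2: False
          hence "q = (U, T)" "p \<in> M" using pq False by auto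
          moreover hence "snd p \<subseteq> U" unfolding U_def by blast
          ultimately show ?thesis by simp
        qed
      qed
    qed
    hence "M' = M" using Mmax unfolding M'_def by (metis subset_insertI)
    hence UTM: "(U, T) \<in> M" unfolding M'_def by blast
    have "snd (U, T) \<subseteq> (\<Union>p\<in>M. snd p)" by (rule UN_upper[OF UTM])
    hence "T \<subseteq> U" unfolding U_def by simp
    thus False using T by blast
  qed
  have wl: "Well_order lam" using cl card_order_on_well_order_on by blast
  have "lam \<le>o |M|" using notsmall not_ordLess_iff_ordLeq[OF wl card_of_Well_order[of M]] by simp
  hence "|Field lam| \<le>o |M|" by (rule ordIso_ordLeq_trans[OF card_of_Field_ordIso[OF cl]])
  then obtain g where g: "inj_on g (Field lam)" "g ` Field lam \<subseteq> M" using card_of_ordLeq[of "Field lam" M] by metis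
  define M' where "M' = g ` Field lam"
  have "|M'| \<le>o |Field lam|" unfolding M'_def by (rule card_of_image)
  hence "|M'| \<le>o lam" by (rule ordLeq_ordIso_trans[OF _ card_of_Field_ordIso[OF cl]])
  hence "|M'| <o kap" by (rule ordLeq_ordLess_trans[OF _ lk])
  hence sM': "small M'" .
  have M'M: "M' \<subseteq> M" using g unfolding M'_def by blast
  have Mp': "fst p \<subseteq> snd p \<and> snd p \<subseteq> V \<and> small (snd p) \<and> fst p \<noteq> snd p \<and> splits (fst p) (snd p)"
    if "p \<in> M'" for p using Mp[OF subsetD[OF M'M that]] .
  define U where "U = (\<Union>p\<in>M'. snd p)"
  have sU: "small U" unfolding U_def using Mp' by (intro small_UN[OF sM']) simp
  have UV: "U \<subseteq> V" unfolding U_def using Mp' by auto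
  obtain E0 where E0: "E0 \<in> comps U" "\<not> small E0" using big_comp_ex[OF UV sU] by blast
  obtain e0 where e0: "e0 \<in> E0" using big_nonempty[OF E0(2)] by blast
  have e0V: "e0 \<in> V - U" using comp_sub[OF E0(1)] e0 by blast
  have "\<forall>p\<in>M'. \<exists>c. c \<in> comps U \<and> (\<exists>B B'. B \<in> comps (fst p) \<and> e0 \<in> B \<and> B' \<in> comps (snd p) \<and> e0 \<notin> B' \<and> c \<subseteq> B' \<and> c \<subseteq> B)"
  proof
    fix p assume pM': "p \<in> M'"
    have pM: "p \<in> M" using M'M pM' by blast
    have pp: "fst p \<subseteq> snd p" "snd p \<subseteq> V" "small (snd p)" "splits (fst p) (snd p)"
      using Mp[OF pM] by auto
    have sU': "snd p \<subseteq> U" unfolding U_def using pM' by blast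
    obtain B where B: "B \<in> comps (fst p)" "e0 \<in> B" using comp_ex[of e0 "fst p"] e0V pp sU' by blast
    have "E0 \<subseteq> B" using comp_L2[OF _ B(1) E0(1) B(2) e0] pp(1) sU' by blast
    hence Bb: "\<not> small B" using E0(2) small_subset by metis
    obtain C1 C2 where c: "C1 \<in> comps (snd p)" "C2 \<in> comps (snd p)" "\<not> small C1" "\<not> small C2"
      "C1 \<subseteq> B" "C2 \<subseteq> B" "C1 \<noteq> C2"
      using pp(4) B(1) Bb unfolding splits_def by (elim ballE impE bexE conjE) auto
    obtain B' where B': "B' \<in> comps (snd p)" "\<not> small B'" "B' \<subseteq> B" "e0 \<notin> B'"
    proof (cases "e0 \<in> C1")
      case True
      hence "e0 \<notin> C2" using comp_disj[OF c(1) c(2)] c(7) by blast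
      thus ?thesis using that c by blast
    next
      case False
      thus ?thesis using that c by blast
    qed
    obtain v where v: "v \<in> B' - U" using big_nonempty[OF big_diff[OF B'(2) sU]] by blast
    have "v \<in> V - U" using v comp_sub[OF B'(1)] by blast
    then obtain c where c: "c \<in> comps U" "v \<in> c" using comp_ex by blast
    have "c \<subseteq> B'" using comp_L2[OF sU' B'(1) c(1)] v c(2) by blast
    thus "\<exists>c. c \<in> comps U \<and> (\<exists>B B'. B \<in> comps (fst p) \<and> e0 \<in> B \<and> B' \<in> comps (snd p) \<and> e0 \<notin> B' \<and> c \<subseteq> B' \<and> c \<subseteq> B)"
      using c B B' by blast
  qed
  from bchoice[OF this] obtain h where h: "\<forall>p\<in>M'. h p \<in> comps U \<and> (\<exists>B B'. B \<in> comps (fst p) \<and> e0 \<in> B \<and> B' \<in> comps (snd p) \<and> e0 \<notin> B' \<and> h p \<subseteq> B' \<and> h p \<subseteq> B)"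
    by blast
  have key: "h p \<noteq> h q" if pq: "p \<in> M'" "q \<in> M'" "snd p \<subseteq> fst q" for p q
  proof
    assume eq: "h p = h q"
    obtain Bp B'p where bp: "Bp \<in> comps (fst p)" "e0 \<in> Bp" "B'p \<in> comps (snd p)" "e0 \<notin> B'p" "h p \<subseteq> B'p"
      using h pq(1) by blast
    obtain Bq B'q where bq: "Bq \<in> comps (fst q)" "e0 \<in> Bq" "h q \<subseteq> Bq"
      using h pq(2) by blast
    have sU': "snd p \<subseteq> U" unfolding U_def using pq by blast
    obtain K where K: "K \<in> comps (snd p)" "e0 \<in> K" using comp_ex[of e0 "snd p"] e0V sU' by blast
    have "Bq \<subseteq> K" using comp_L2[OF pq(3) K(1) bq(1) K(2) bq(2)] .
    hence hqK: "h q \<subseteq> K" using bq(3) by blast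
    have "h p \<in> comps U" using h pq(1) by blast
    then obtain x where x: "x \<in> h p" using comp_ne by blast
    have "x \<in> B'p" "x \<in> K" using x bp(5) hqK eq by auto
    hence "B'p = K" using comp_disj[OF bp(3) K(1)] by blast
    thus False using bp(4) K(2) by blast
  qed
  have "inj_on h M'"
  proof (rule inj_onI)
    fix p q assume pq: "p \<in> M'" "q \<in> M'" "h p = h q"
    show "p = q"
    proof (rule ccontr)
      assume "p \<noteq> q"
      hence "snd p \<subseteq> fst q \<or> snd q \<subseteq> fst p" using Mpq M'M pq by blast
      thus False using key pq by metis
    qed
  qed
  hence "inj_on (h \<circ> g) (Field lam)" using g(1) unfolding M'_def by (simp add: comp_inj_on)
  moreover have "(h \<circ> g) ` Field lam \<subseteq> comps U" using h unfolding M'_def by auto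
  ultimately have "|Field lam| \<le>o |comps U|" using card_of_ordLeq by blast
  hence "lam \<le>o |comps U|" using card_of_Field_ordIso[OF cl] ordIso_ordLeq_trans ordIso_symmetric by blast
  moreover have "|comps U| <o lam" using comps_bounds[OF UV sU] by blast
  ultimately show False using not_ordLess_ordLeq by blast
qed


lemma conn_star:
  assumes "r \<in> Z" "\<And>x. x \<in> Z \<Longrightarrow> (adj_in E Z)\<^sup>*\<^sup>* r x"
  shows "connected_in E Z"
  unfolding connected_in_def
proof (intro conjI ballI)
  show "Z \<noteq> {}" using assms(1) by blast
  fix x y assume "x \<in> Z" "y \<in> Z"
  thus "(adj_in E Z)\<^sup>*\<^sup>* x y" using assms(2) rtc_sym rtranclp_trans by metis
qed

lemma conn_extend:
  assumes c: "connected_in E Z" and sub: "Z \<subseteq> Z'" and ext: "\<And>x. x \<in> Z' \<Longrightarrow> x \<in> Z \<or> (\<exists>z\<in>Z. {z, x} \<in> E)"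
  shows "connected_in E Z'"
proof -
  obtain r where r: "r \<in> Z" using c unfolding connected_in_def by blast
  have "(adj_in E Z')\<^sup>*\<^sup>* r x" if x: "x \<in> Z'" for x
  proof (cases "x \<in> Z")
    case True
    hence "(adj_in E Z)\<^sup>*\<^sup>* r x" using c r unfolding connected_in_def by blast
    thus ?thesis using adj_mono[OF sub] by blast
  next
    case False
    then obtain z where z: "z \<in> Z" "{z, x} \<in> E" using ext x by blast
    hence "(adj_in E Z)\<^sup>*\<^sup>* r z" using c r unfolding connected_in_def by blast
    hence "(adj_in E Z')\<^sup>*\<^sup>* r z" using adj_mono[OF sub] by blast
    moreover have "adj_in E Z' z x" using z x sub unfolding adj_in_def by blast
    ultimately show ?thesis by (meson rtranclp.rtrancl_into_rtrancl)
  qed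
  thus ?thesis using conn_star r sub by blast
qed

lemma path_finite:
  assumes "(adj_in E A)\<^sup>*\<^sup>* a b" "a \<in> A"
  shows "\<exists>P. finite P \<and> a \<in> P \<and> b \<in> P \<and> P \<subseteq> A \<and> connected_in E P"
  using assms
proof (induction rule: rtranclp_induct)
  case base
  have "connected_in E {a}" unfolding connected_in_def by simp
  thus ?case using base by blast
next
  case (step y z)
  then obtain P where P: "finite P" "a \<in> P" "y \<in> P" "P \<subseteq> A" "connected_in E P" by blast
  have "connected_in E (insert z P)"
    using conn_extend[OF P(5), of "insert z P"] P(3) step.hyps(2) unfolding adj_in_def by blast
  moreover have "z \<in> A" using step.hyps(2) unfolding adj_in_def by blast
  ultimately show ?case using P by blast
qed

definition good :: "'v set \<Rightarrow> 'v set \<Rightarrow> 'v set \<Rightarrow> bool" where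
  "good S0 D X \<longleftrightarrow> X \<subseteq> V - S0 \<and> connected_in E X \<and> small X \<and>
     (\<forall>T F'. S0 \<union> X \<subseteq> T \<longrightarrow> T \<subseteq> V \<longrightarrow> small T \<longrightarrow> F' \<in> comps T \<longrightarrow> \<not> small F' \<longrightarrow> F' \<subseteq> D \<longrightarrow>
        (\<exists>x\<in>X. \<exists>y\<in>F'. {x, y} \<in> E))"


lemma good_use:
  assumes "good S0 D X" "S0 \<union> X \<subseteq> T" "T \<subseteq> V" "small T" "F' \<in> comps T" "\<not> small F'" "F' \<subseteq> D"
  shows "\<exists>x\<in>X. \<exists>y\<in>F'. {x, y} \<in> E"
proof -
  have "\<forall>T F'. S0 \<union> X \<subseteq> T \<longrightarrow> T \<subseteq> V \<longrightarrow> small T \<longrightarrow> F' \<in> comps T \<longrightarrow> \<not> small F' \<longrightarrow> F' \<subseteq> D \<longrightarrow>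
        (\<exists>x\<in>X. \<exists>y\<in>F'. {x, y} \<in> E)" using assms(1) unfolding good_def by (elim conjE)
  thus ?thesis using assms(2-7) by simp
qed

lemma stab_use:
  assumes "stab S0 D" "S0 \<subseteq> T" "T \<subseteq> V" "small T" "C1 \<in> comps T" "C2 \<in> comps T"
    "\<not> small C1" "\<not> small C2" "C1 \<subseteq> D" "C2 \<subseteq> D"
  shows "C1 = C2"
proof -
  have "\<forall>T. S0 \<subseteq> T \<longrightarrow> T \<subseteq> V \<longrightarrow> small T \<longrightarrow>
     (\<forall>C1\<in>comps T. \<forall>C2\<in>comps T. \<not> small C1 \<longrightarrow> \<not> small C2 \<longrightarrow> C1 \<subseteq> D \<longrightarrow> C2 \<subseteq> D \<longrightarrow> C1 = C2)"
    using assms(1) unfolding stab_def .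
  thus ?thesis using assms(2-10) by simp
qed

lemma extend:
  assumes S0: "S0 \<subseteq> V" "small S0" "D \<in> comps S0" "\<not> small D" "stab S0 D"
    and Fg: "\<And>X. X \<in> Fm \<Longrightarrow> good S0 D X" and Fs: "small Fm"
  shows "\<exists>X. good S0 D X \<and> X \<inter> \<Union>Fm = {} \<and> X \<noteq> {} \<and> (\<forall>Y\<in>Fm. \<exists>x\<in>X. \<exists>y\<in>Y. {x, y} \<in> E)"
proof -
  define W where "W = S0 \<union> \<Union>Fm"
  have sUF: "small (\<Union>Fm)" using Fg unfolding good_def by (intro small_Union[OF Fs]) simp
  have sW: "small W" unfolding W_def by (rule small_Un[OF S0(2) sUF])
  have FgV: "X \<subseteq> V - S0" if "X \<in> Fm" for X using Fg[OF that] unfolding good_def by simp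
  have WV: "W \<subseteq> V" unfolding W_def using S0(1) FgV by blast
  have S0W: "S0 \<subseteq> W" unfolding W_def by blast
  have DV: "D \<subseteq> V - S0" by (rule comp_sub[OF S0(3)])
  have Y1: "D - W \<subseteq> V - W" using DV by blast
  have Y2: "\<not> small (D - W)" by (rule big_diff[OF S0(4) sW])
  have Y3: "C \<subseteq> D - W" if H: "C \<in> comps W" "C \<inter> (D - W) \<noteq> {}" for C
  proof -
    obtain x where "x \<in> C" "x \<in> D" using H by blast
    hence "C \<subseteq> D" using comp_L2[OF S0W S0(3) H(1)] by blast
    thus ?thesis using comp_sub[OF H(1)] by blast
  qed
  obtain F where F: "F \<in> comps W" "F \<subseteq> D - W" "\<not> small F" using L1[OF WV sW Y1 Y2 Y3] by blast
  obtain r where r: "r \<in> F" using big_nonempty[OF F(3)] by blast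
  have "\<forall>X\<in>Fm. \<exists>P. finite P \<and> r \<in> P \<and> P \<subseteq> F \<and> connected_in E P \<and> (\<exists>x\<in>X. \<exists>y\<in>P. {x, y} \<in> E)"
  proof
    fix X assume X: "X \<in> Fm"
    have gX: "good S0 D X" by (rule Fg[OF X])
    have "S0 \<union> X \<subseteq> W" unfolding W_def using X by blast
    hence "\<exists>x\<in>X. \<exists>y\<in>F. {x, y} \<in> E" using good_use[OF gX _ WV sW F(1) F(3)] F(2) by blast
    then obtain x y where xy: "x \<in> X" "y \<in> F" "{x, y} \<in> E" by blast
    have "(adj_in E F)\<^sup>*\<^sup>* r y" by (rule comp_path[OF F(1) r xy(2)])
    from path_finite[OF this r] obtain P where "finite P" "r \<in> P" "y \<in> P" "P \<subseteq> F" "connected_in E P"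
      by (elim exE conjE)
    thus "\<exists>P. finite P \<and> r \<in> P \<and> P \<subseteq> F \<and> connected_in E P \<and> (\<exists>x\<in>X. \<exists>y\<in>P. {x, y} \<in> E)"
      using xy by blast
  qed
  from bchoice[OF this] obtain P where P: "\<forall>X\<in>Fm. finite (P X) \<and> r \<in> P X \<and> P X \<subseteq> F \<and> connected_in E (P X) \<and> (\<exists>x\<in>X. \<exists>y\<in>P X. {x, y} \<in> E)"
    by blast
  define Y0 where "Y0 = insert r (\<Union>X\<in>Fm. P X)"
  have sY0: "small Y0" unfolding Y0_def
    by (rule small_insert, rule small_UN[OF Fs], rule finite_small) (use P in blast)
  have Y0F: "Y0 \<subseteq> F" unfolding Y0_def using P r by blast
  have cY0: "connected_in E Y0"
  proof (rule conn_star)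
    show "r \<in> Y0" unfolding Y0_def by blast
    fix x assume "x \<in> Y0"
    show "(adj_in E Y0)\<^sup>*\<^sup>* r x"
    proof (cases "x = r")
      case True thus ?thesis by simp
    next
      case False
      then obtain X where X: "X \<in> Fm" "x \<in> P X" using \<open>x \<in> Y0\<close> unfolding Y0_def by blast
      hence "(adj_in E (P X))\<^sup>*\<^sup>* r x" using P unfolding connected_in_def by blast
      moreover have "P X \<subseteq> Y0" unfolding Y0_def using X by blast
      ultimately show ?thesis using adj_mono by blast
    qed
  qed
  define Z where "Z = rec_nat Y0 (\<lambda>_ Z. Z \<union> {v\<in>F. \<exists>z\<in>Z. {z, v} \<in> E})"
  have Z0: "Z 0 = Y0" unfolding Z_def by simp
  have ZS: "Z (Suc n) = Z n \<union> {v\<in>F. \<exists>z\<in>Z n. {z, v} \<in> E}" for n unfolding Z_def by simp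
  have ZF: "Z n \<subseteq> F" for n by (induction n) (use Y0F Z0 ZS in auto)
  have ZY: "Y0 \<subseteq> Z n" for n by (induction n) (use Z0 ZS in auto)
  have Zc: "connected_in E (Z n)" for n
  proof (induction n)
    case 0 thus ?case using Z0 cY0 by simp
  next
    case (Suc n)
    show ?case by (rule conn_extend[OF Suc]) (auto simp: ZS)
  qed
  have "\<exists>n. small (Z n) \<and> \<not> small (Z (Suc n))"
  proof (rule ccontr)
    assume "\<not> ?thesis"
    hence st: "small (Z n) \<Longrightarrow> small (Z (Suc n))" for n by blast
    have allsm: "small (Z n)" for n
    proof (induction n)
      case 0 thus ?case using Z0 sY0 by simp
    next
      case (Suc n) thus ?case by (rule st)
    qed
    have "small (\<Union>n. Z n)" by (rule small_UN[OF nat_small allsm])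
    moreover have "F \<subseteq> (\<Union>n. Z n)"
    proof
      fix v assume v: "v \<in> F"
      have "(adj_in E F)\<^sup>*\<^sup>* r v" by (rule comp_path[OF F(1) r v])
      thus "v \<in> (\<Union>n. Z n)"
      proof (induction rule: rtranclp_induct)
        case base thus ?case using ZY[of 0] Y0_def by blast
      next
        case (step y z)
        then obtain n where "y \<in> Z n" by blast
        moreover have "z \<in> F" "{y, z} \<in> E" using step.hyps(2) unfolding adj_in_def by auto
        ultimately have "z \<in> Z (Suc n)" unfolding ZS by blast
        thus ?case by blast
      qed
    qed
    ultimately have "small F" by (rule small_subset)
    thus False using F(3) by contradiction
  qed
  then obtain n where n: "small (Z n)" "\<not> small (Z (Suc n))" by (elim exE conjE)
  define X where "X = Z n"
  define N where "N = Z (Suc n) - Z n"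
  have Nb: "\<not> small N" unfolding N_def by (rule big_diff[OF n(2) n(1)])
  have NF: "\<And>v. v \<in> N \<Longrightarrow> v \<in> F \<and> (\<exists>z\<in>X. {z, v} \<in> E)" unfolding N_def X_def ZS by blast
  have XF: "X \<subseteq> F" unfolding X_def by (rule ZF)
  have FVW: "F \<subseteq> V - W" by (rule comp_sub[OF F(1)])
  have gX: "good S0 D X" unfolding good_def
  proof (intro conjI allI impI)
    show "X \<subseteq> V - S0" using XF FVW S0W by blast
    show "connected_in E X" unfolding X_def by (rule Zc)
    show "small X" unfolding X_def by (rule n(1))
    fix T F' assume T: "S0 \<union> X \<subseteq> T" "T \<subseteq> V" "small T" "F' \<in> comps T" "\<not> small F'" "F' \<subseteq> D"
    define T' where "T' = T \<union> W"
    have sT': "small T'" unfolding T'_def by (rule small_Un[OF T(3) sW])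
    have T'V: "T' \<subseteq> V" unfolding T'_def using T(2) WV by blast
    have N'b: "\<not> small (N - T')" by (rule big_diff[OF Nb sT'])
    have "\<exists>v\<in>N - T'. \<exists>C\<in>comps T'. v \<in> C \<and> \<not> small C"
    proof (rule ccontr)
      assume nn: "\<not> ?thesis"
      have "N - T' \<subseteq> \<Union>{C\<in>comps T'. small C}"
      proof
        fix v assume v: "v \<in> N - T'"
        hence "v \<in> V - T'" using NF FVW by blast
        then obtain C where C: "C \<in> comps T'" "v \<in> C" using comp_ex by blast
        hence "small C" using nn v by (meson bexI)
        thus "v \<in> \<Union>{C\<in>comps T'. small C}" using C by blast
      qed
      moreover have "small (\<Union>{C\<in>comps T'. small C})"
        by (rule small_Union, rule small_subset[OF comps_small[OF T'V sT']]) auto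
      ultimately have "small (N - T')" by (rule small_subset[rotated])
      thus False using N'b by contradiction
    qed
    then obtain v C where v: "v \<in> N - T'" "C \<in> comps T'" "v \<in> C" "\<not> small C" by (elim bexE conjE) blast
    have vF: "v \<in> F" and vz: "\<exists>z\<in>X. {z, v} \<in> E" using NF v(1) by auto
    have "v \<in> V - T" using v(1) vF FVW unfolding T'_def by blast
    then obtain K where K: "K \<in> comps T" "v \<in> K" using comp_ex by blast
    have TT': "T \<subseteq> T'" unfolding T'_def by blast
    have "C \<subseteq> K" by (rule comp_L2[OF TT' K(1) v(2) K(2) v(3)])
    have Kb: "\<not> small K"
    proof
      assume "small K"
      hence "small C" using \<open>C \<subseteq> K\<close> by (rule small_subset)
      thus False using v(4) by contradiction
    qed
    have S0T: "S0 \<subseteq> T" using T(1) by blast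
    have "v \<in> D" using vF F(2) by blast
    hence KD: "K \<subseteq> D" by (rule comp_L2[OF S0T S0(3) K(1) _ K(2)])
    have "K = F'" by (rule stab_use[OF S0(5) S0T T(2) T(3) K(1) T(4) Kb T(5) KD T(6)])
    hence "v \<in> F'" using K(2) by blast
    thus "\<exists>x\<in>X. \<exists>y\<in>F'. {x, y} \<in> E" using vz by blast
  qed
  have "X \<inter> \<Union>Fm = {}" using XF FVW unfolding W_def by blast
  moreover have "X \<noteq> {}" using Zc unfolding X_def connected_in_def by blast
  moreover have "\<forall>Y\<in>Fm. \<exists>x\<in>X. \<exists>y\<in>Y. {x, y} \<in> E"
  proof
    fix Y assume Y: "Y \<in> Fm"
    then obtain x y where "x \<in> Y" "y \<in> P Y" "{x, y} \<in> E" using P by blast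
    moreover have "P Y \<subseteq> X" unfolding X_def using ZY[of n] Y unfolding Y0_def by blast
    ultimately show "\<exists>x\<in>X. \<exists>y\<in>Y. {x, y} \<in> E" by (metis insert_commute subsetD)
  qed
  ultimately show ?thesis using gX by blast
qed


lemma minor:
  assumes S0: "S0 \<subseteq> V" "small S0" "D \<in> comps S0" "\<not> small D" "stab S0 D"
  shows "complete_minor V E (Field kap)"
proof -
  define A where "A = {Fm. (\<forall>X\<in>Fm. good S0 D X) \<and>
     (\<forall>X\<in>Fm. \<forall>Y\<in>Fm. X \<noteq> Y \<longrightarrow> X \<inter> Y = {} \<and> (\<exists>x\<in>X. \<exists>y\<in>Y. {x, y} \<in> E))}"
  have "\<forall>C\<in>chains A. \<Union>C \<in> A"
  proof
    fix C assume C: "C \<in> chains A"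
    have 1: "\<forall>X\<in>\<Union>C. good S0 D X"
    proof
      fix X assume "X \<in> \<Union>C"
      then obtain M where M: "M \<in> C" "X \<in> M" by blast
      have "M \<in> A" using C M(1) unfolding chains_def by blast
      thus "good S0 D X" using M(2) unfolding A_def by simp
    qed
    have 2: "\<forall>X\<in>\<Union>C. \<forall>Y\<in>\<Union>C. X \<noteq> Y \<longrightarrow> X \<inter> Y = {} \<and> (\<exists>x\<in>X. \<exists>y\<in>Y. {x, y} \<in> E)"
    proof (intro ballI impI)
      fix X Y assume "X \<in> \<Union>C" "Y \<in> \<Union>C" "X \<noteq> Y"
      then obtain M1 M2 where m: "M1 \<in> C" "X \<in> M1" "M2 \<in> C" "Y \<in> M2" by blast
      have "M1 \<subseteq> M2 \<or> M2 \<subseteq> M1" using C m unfolding chains_def chain_subset_def by blast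
      then obtain M where M: "M \<in> C" "X \<in> M" "Y \<in> M" using m by blast
      have "M \<in> A" using C M(1) unfolding chains_def by blast
      thus "X \<inter> Y = {} \<and> (\<exists>x\<in>X. \<exists>y\<in>Y. {x, y} \<in> E)" using M(2,3) \<open>X \<noteq> Y\<close> unfolding A_def by simp
    qed
    show "\<Union>C \<in> A" using 1 2 unfolding A_def by simp
  qed
  then obtain Fm where FA: "Fm \<in> A" and Fmax: "\<forall>X\<in>A. Fm \<subseteq> X \<longrightarrow> X = Fm" using Zorn_Lemma by blast
  have Fg: "\<And>X. X \<in> Fm \<Longrightarrow> good S0 D X" using FA unfolding A_def by simp
  have Fp: "\<And>X Y. X \<in> Fm \<Longrightarrow> Y \<in> Fm \<Longrightarrow> X \<noteq> Y \<Longrightarrow> X \<inter> Y = {} \<and> (\<exists>x\<in>X. \<exists>y\<in>Y. {x, y} \<in> E)"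
    using FA unfolding A_def by simp
  have nsF: "\<not> small Fm"
  proof
    assume sF: "small Fm"
    obtain X where X: "good S0 D X" "X \<inter> \<Union>Fm = {}" "X \<noteq> {}" "\<forall>Y\<in>Fm. \<exists>x\<in>X. \<exists>y\<in>Y. {x, y} \<in> E"
    proof -
      have "\<exists>X. good S0 D X \<and> X \<inter> \<Union>Fm = {} \<and> X \<noteq> {} \<and> (\<forall>Y\<in>Fm. \<exists>x\<in>X. \<exists>y\<in>Y. {x, y} \<in> E)"
        by (rule extend[OF S0 _ sF]) (rule Fg)
      thus ?thesis using that by (elim exE conjE)
    qed
    have XF: "X \<notin> Fm" using X(2,3) by blast
    have "insert X Fm \<in> A" unfolding A_def
    proof (intro CollectI conjI ballI impI)
      fix Y assume "Y \<in> insert X Fm"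
      thus "good S0 D Y" using X(1) Fg by blast
    next
      fix Y Z assume YZ: "Y \<in> insert X Fm" "Z \<in> insert X Fm" "Y \<noteq> Z"
      show "Y \<inter> Z = {}"
        using YZ X(2) Fp by blast
      show "\<exists>x\<in>Y. \<exists>y\<in>Z. {x, y} \<in> E"
      proof (cases "Y = X")
        case True
        hence "Z \<in> Fm" using YZ by blast
        thus ?thesis using X(4) True by blast
      next
        case False
        hence Y: "Y \<in> Fm" using YZ by blast
        show ?thesis
        proof (cases "Z = X")
          case True
          then obtain x y where "x \<in> X" "y \<in> Y" "{x, y} \<in> E" using X(4) Y by blast
          thus ?thesis using True by (metis insert_commute)
        next
          case False
          hence "Z \<in> Fm" using YZ by blast
          thus ?thesis using Fp Y YZ(3) by blast
        qed
      qed
    qed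
    hence "insert X Fm = Fm" using Fmax by (metis subset_insertI)
    thus False using XF by blast
  qed
  have wk: "Well_order kap" using ck card_order_on_well_order_on by blast
  have "kap \<le>o |Fm|" using nsF not_ordLess_iff_ordLeq[OF wk card_of_Well_order[of Fm]] by simp
  hence "|Field kap| \<le>o |Fm|" by (rule ordIso_ordLeq_trans[OF card_of_Field_ordIso[OF ck]])
  then obtain g where g: "inj_on g (Field kap)" "g ` Field kap \<subseteq> Fm" using card_of_ordLeq[of "Field kap" Fm] by metis
  show ?thesis unfolding complete_minor_def
  proof (intro exI[of _ g] conjI ballI impI)
    fix u assume u: "u \<in> Field kap"
    hence gu: "g u \<in> Fm" using g by blast
    have "g u \<subseteq> V - S0" "connected_in E (g u)" using Fg[OF gu] unfolding good_def by simp_all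
    thus "g u \<noteq> {}" "g u \<subseteq> V" "connected_in E (g u)" unfolding connected_in_def by auto
  next
    fix u v assume uv: "u \<in> Field kap" "v \<in> Field kap" "u \<noteq> v"
    hence "g u \<noteq> g v" using g(1) unfolding inj_on_def by blast
    moreover have "g u \<in> Fm" "g v \<in> Fm" using g uv by auto
    ultimately have "g u \<inter> g v = {} \<and> (\<exists>x\<in>g u. \<exists>y\<in>g v. {x, y} \<in> E)" using Fp by blast
    thus "g u \<inter> g v = {}" "\<exists>x\<in>g u. \<exists>y\<in>g v. {x, y} \<in> E" by auto
  qed
qed

end


theorem mainTheorem9:
  fixes V :: "'v set" and E :: "'v set set" and kap :: "'k rel"
  assumes "graph V E"
    and "Card_order kap" and "BNF_Cardinal_Arithmetic.cinfinite kap" and "regularCard kap"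
    and "\<exists>lam :: 'k rel. Card_order lam \<and> BNF_Cardinal_Arithmetic.cinfinite lam \<and> (lam, kap) \<in> ordLess \<and> kl_connected V E kap lam"
  shows "complete_minor V E (Field kap)"
proof -
  obtain lam :: "'k rel" where l: "Card_order lam" "BNF_Cardinal_Arithmetic.cinfinite lam" "(lam, kap) \<in> ordLess" "kl_connected V E kap lam"
    using assms(5) by blast
  interpret kl_setting V E kap lam
    using assms(1-4) l by (unfold_locales) auto
  obtain S0 D where "S0 \<subseteq> V" "small S0" "D \<in> comps S0" "\<not> small D" "stab S0 D"
    using stable by (elim exE conjE)
  thus ?thesis by (rule minor)
qed

end
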